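(* Let $Q$ be a quantity space over a field $K$ with a basis $\{e_1,\ldots,e_n\}$, and let $x=\mu\cdot\prod_{i=1}^n e_i^{k_i}$ (with $\mu\in K$, $k_i\in\mathbb{Z}$). Then the following are equivalent: (1) $x$ is a non-zero quantity; (2) $\mu\neq0$; (3) $x$ is invertible.
   Context: A scalable monoid over a (unital, associative) ring $R$ is a monoid $X$ (identity $1_X$, product written $xy$) together with a map $R\times X\to X$, $(\alpha,x)\mapsto\alpha\cdot x$, such that $1\cdot x=x$, $\alpha\cdot(\beta\cdot x)=\alpha\beta\cdot x$ and $\alpha\cdot(xy)=(\alpha\cdot x)y=x(\alpha\cdot y)$. A quantity space over a field $K$ is a commutative scalable monoid $Q$ over $K$ for which there exists a basis, i.e. a finite set $\{e_1,\ldots,e_n\}$ of invertible elements of $Q$ such that every $x\in Q$ has a unique expansion $x=\mu\cdot\prod_{i=1}^n e_i^{k_i}$ with $\mu\in K$ and $k_i\in\mathbb{Z}$. Elements of $Q$ are called quantities. A quantity $x$ is a zero quantity if $x=0\cdot x$ (equivalently, $x$ is the zero element $0\cdot y$ of its commensurability class, where $x\sim y$ iff $\alpha\cdot x=\beta\cdot y$ for some $\alpha,\beta\in K$); otherwise it is non-zero. *)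

theory Defs
  imports "HOL-Library.FuncSet"
begin

definition scalable_monoid :: "('k::ring_1 \<Rightarrow> 'q::monoid_mult \<Rightarrow> 'q) \<Rightarrow> bool" where
  "scalable_monoid sc \<longleftrightarrow>
     (\<forall>x. sc 1 x = x) \<and>
     (\<forall>a b x. sc a (sc b x) = sc (a * b) x) \<and>
     (\<forall>a x y. sc a (x * y) = sc a x * y \<and> sc a (x * y) = x * sc a y)"

definition invertible_q :: "'q::monoid_mult \<Rightarrow> bool" where
  "invertible_q x \<longleftrightarrow> (\<exists>y. x * y = 1 \<and> y * x = 1)"

definition qinv :: "'q::monoid_mult \<Rightarrow> 'q" where
  "qinv x = (THE y. x * y = 1 \<and> y * x = 1)"

definition zpow :: "'q::monoid_mult \<Rightarrow> int \<Rightarrow> 'q" where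
  "zpow x k = (if 0 \<le> k then x ^ nat k else qinv x ^ nat (- k))"

definition is_basis :: "('k::field \<Rightarrow> 'q::comm_monoid_mult \<Rightarrow> 'q) \<Rightarrow> 'q set \<Rightarrow> bool" where
  "is_basis sc B \<longleftrightarrow> finite B \<and> (\<forall>e\<in>B. invertible_q e) \<and>
     (\<forall>x. \<exists>!(mu, k). k \<in> extensional B \<and> x = sc mu (\<Prod>e\<in>B. zpow e (k e)))"

definition quantity_space :: "('k::field \<Rightarrow> 'q::comm_monoid_mult \<Rightarrow> 'q) \<Rightarrow> bool" where
  "quantity_space sc \<longleftrightarrow> scalable_monoid sc \<and> (\<exists>B. is_basis sc B)"

definition zero_quantity :: "('k::field \<Rightarrow> 'q \<Rightarrow> 'q) \<Rightarrow> 'q \<Rightarrow> bool" where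
  "zero_quantity sc x \<longleftrightarrow> x = sc 0 x"

end

theory Submission
  imports Defs
begin

lemma qinv_props:
  fixes x :: "'q::monoid_mult"
  assumes "invertible_q x"
  shows "x * qinv x = 1 \<and> qinv x * x = 1"
proof -
  obtain y where y: "x * y = 1" "y * x = 1" using assms unfolding invertible_q_def by blast
  have u: "\<exists>!y. x * y = 1 \<and> y * x = 1"
  proof (rule ex1I[of _ y])
    show "x * y = 1 \<and> y * x = 1" using y by simp
    fix z assume z: "x * z = 1 \<and> z * x = 1"
    have "z = (y * x) * z" using y by simp
    also have "\<dots> = y * (x * z)" by (simp add: mult.assoc)
    also have "\<dots> = y" using z by simp
    finally show "z = y" .
  qed
  show ?thesis unfolding qinv_def using theI'[OF u] by simp
qed

lemma inv_qinv: "invertible_q (x::'q::monoid_mult) \<Longrightarrow> invertible_q (qinv x)"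
  using qinv_props unfolding invertible_q_def by blast

lemma inv_mult:
  fixes a b :: "'q::comm_monoid_mult"
  assumes "invertible_q a" "invertible_q b"
  shows "invertible_q (a * b)"
proof -
  obtain c where c: "a * c = 1" using assms(1) unfolding invertible_q_def by blast
  obtain d where d: "b * d = 1" using assms(2) unfolding invertible_q_def by blast
  have "(a * b) * (d * c) = 1"
    by (metis c d mult.assoc mult.right_neutral)
  then show ?thesis unfolding invertible_q_def by (metis mult.commute)
qed

lemma inv_one: "invertible_q (1::'q::monoid_mult)"
  unfolding invertible_q_def by auto

lemma inv_pow:
  fixes a :: "'q::comm_monoid_mult"
  shows "invertible_q a \<Longrightarrow> invertible_q (a ^ n)"
  by (induction n) (auto intro: inv_mult inv_one)

lemma inv_zpow:
  fixes a :: "'q::comm_monoid_mult"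
  shows "invertible_q a \<Longrightarrow> invertible_q (zpow a n)"
  unfolding zpow_def by (auto intro: inv_pow inv_qinv)

lemma inv_prod:
  fixes f :: "'a \<Rightarrow> 'q::comm_monoid_mult"
  shows "(\<forall>e\<in>B. invertible_q (f e)) \<Longrightarrow> invertible_q (\<Prod>e\<in>B. f e)"
proof (induction B rule: infinite_finite_induct)
  case (infinite A) then show ?case by (simp add: inv_one)
next
  case empty then show ?case by (simp add: inv_one)
next
  case (insert a A) then show ?case by (simp add: inv_mult)
qed

theorem proposition3p4:
  fixes sc :: "'k::field \<Rightarrow> 'q::comm_monoid_mult \<Rightarrow> 'q"
    and B :: "'q set" and mu :: 'k and k :: "'q \<Rightarrow> int" and x :: 'q
  assumes "quantity_space sc"
    and "is_basis sc B"
    and "x = sc mu (\<Prod>e\<in>B. zpow e (k e))"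
  shows "(\<not> zero_quantity sc x \<longleftrightarrow> mu \<noteq> 0) \<and> (mu \<noteq> 0 \<longleftrightarrow> invertible_q x)"
proof -
  define P where "P = (\<Prod>e\<in>B. zpow e (k e))"
  have sm: "scalable_monoid sc" using assms(1) unfolding quantity_space_def by blast
  have s1: "\<And>x. sc 1 x = x" and s2: "\<And>a b x. sc a (sc b x) = sc (a * b) x"
    using sm unfolding scalable_monoid_def by auto
  have s3: "\<And>a x y. sc a (x * y) = sc a x * y" and s4: "\<And>a x y. sc a (x * y) = x * sc a y"
    using sm unfolding scalable_monoid_def by blast+
  have fin: "finite B" and invB: "\<forall>e\<in>B. invertible_q e"
    and uq: "\<And>y. \<exists>!(m, k). k \<in> extensional B \<and> y = sc m (\<Prod>e\<in>B. zpow e (k e))"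
    using assms(2) unfolding is_basis_def by auto
  define k' where "k' = restrict k B"
  have Pk': "P = (\<Prod>e\<in>B. zpow e (k' e))" unfolding P_def k'_def by (rule prod.cong) auto
  have k'ext: "k' \<in> extensional B" unfolding k'_def by simp
  have key: "\<And>a b. sc a P = sc b P \<Longrightarrow> a = b"
  proof -
    fix a b assume h: "sc a P = sc b P"
    from uq[of "sc a P"] have "\<And>p q. p \<in> {(a, k'), (b, k')} \<Longrightarrow> q \<in> {(a, k'), (b, k')} \<Longrightarrow> p = q"
      using h k'ext Pk' by (auto simp: case_prod_beta) (metis (mono_tags, lifting) case_prod_conv)+
    then show "a = b" by blast
  qed
  have Pinv: "invertible_q P" unfolding P_def by (rule inv_prod) (simp add: invB inv_zpow)
  have x: "x = sc mu P" using assms(3) P_def by simp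
  have A: "zero_quantity sc x \<longleftrightarrow> mu = 0"
  proof
    assume "zero_quantity sc x"
    then have "sc mu P = sc 0 P" unfolding zero_quantity_def x s2 by simp
    then show "mu = 0" by (rule key)
  next
    assume "mu = 0" then show "zero_quantity sc x" unfolding zero_quantity_def x s2 by simp
  qed
  have Bd: "mu \<noteq> 0 \<longleftrightarrow> invertible_q x"
  proof
    assume mu: "mu \<noteq> 0"
    obtain Q where Q: "P * Q = 1" using Pinv unfolding invertible_q_def by blast
    have "x * sc (1/mu) Q = sc mu (P * sc (1/mu) Q)" unfolding x s3 ..
    also have "\<dots> = sc mu (sc (1/mu) (P * Q))" by (simp add: s4)
    also have "\<dots> = 1" using mu Q by (simp add: s2 s1)
    finally show "invertible_q x" unfolding invertible_q_def by (metis mult.commute)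
  next
    assume inv: "invertible_q x"
    show "mu \<noteq> 0"
    proof
      assume "mu = 0"
      obtain y where y: "x * y = 1" using inv unfolding invertible_q_def by blast
      have one: "1 = sc 0 (P * y)" using y `mu = 0` x s3 by metis
      have z1: "sc 0 (1::'q) = 1" using one s2 by (metis mult_zero_left)
      have "sc 0 P = P" using s4[of 0 P 1] z1 by simp
      then have "sc 1 P = sc 0 P" by (simp add: s1)
      then show False using key by fastforce
    qed
  qed
  show ?thesis using A Bd by blast
qed

end
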